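(* Let $(\mathscr{E},\mathscr{M})$ be an ordinary prefactorization system on (the underlying ordinary category of) a $\mathscr{V}$-category $\mathscr{B}$ such that each $e\in\mathscr{E}$ is $\mathscr{V}$-orthogonal to each $m\in\mathscr{M}$. Then $(\mathscr{E},\mathscr{M})$ is a $\mathscr{V}$-prefactorization-system on $\mathscr{B}$.
   Context: $\mathscr{V}$ is a closed symmetric monoidal category; ordinary categories are not assumed locally small. For $e:A_1\to A_2$, $m:B_1\to B_2$ in $\mathscr{B}$, $e\downarrow_\mathscr{V} m$ ($\mathscr{V}$-orthogonal) means the square formed by $\mathscr{B}(A_2,m)$, $\mathscr{B}(A_1,m)$, $\mathscr{B}(e,B_1)$, $\mathscr{B}(e,B_2)$ is a pullback in $\mathscr{V}$; ordinary orthogonality $e\downarrow m$ means each commutative square $m\cdot u=v\cdot e$ has a unique diagonal $w$ with $w\cdot e=u$, $m\cdot w=v$. An ordinary prefactorization system is a pair $(\mathscr{E},\mathscr{M})$ where $\mathscr{M}$ is exactly the class of $m$ with $e\downarrow m$ for all $e\in\mathscr{E}$ and $\mathscr{E}$ exactly the class of $e$ with $e\downarrow m$ for all $m\in\mathscr{M}$; a $\mathscr{V}$-prefactorization-system is defined likewise with $\downarrow_\mathscr{V}$. *)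

theory Defs
  imports Main
begin

text \<open>A category with object type 'o and arrow type 'a (not assumed locally small:
arrows form an arbitrary set of a HOL type). cCmp g f is the composite g . f.\<close>

record ('o, 'a) cat =
  cObj :: "'o set"
  cArr :: "'a set"
  cDom :: "'a \<Rightarrow> 'o"
  cCod :: "'a \<Rightarrow> 'o"
  cCmp :: "'a \<Rightarrow> 'a \<Rightarrow> 'a"
  cId  :: "'o \<Rightarrow> 'a"

definition hom :: "('o, 'a, 'z) cat_scheme \<Rightarrow> 'o \<Rightarrow> 'o \<Rightarrow> 'a set" where
  "hom C A B = {f \<in> cArr C. cDom C f = A \<and> cCod C f = B}"

definition category :: "('o, 'a, 'z) cat_scheme \<Rightarrow> bool" where
  "category C \<longleftrightarrow>
     (\<forall>f\<in>cArr C. cDom C f \<in> cObj C \<and> cCod C f \<in> cObj C) \<and>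
     (\<forall>A\<in>cObj C. cId C A \<in> hom C A A) \<and>
     (\<forall>f g. f \<in> cArr C \<and> g \<in> cArr C \<and> cCod C f = cDom C g
            \<longrightarrow> cCmp C g f \<in> hom C (cDom C f) (cCod C g)) \<and>
     (\<forall>f\<in>cArr C. cCmp C (cId C (cCod C f)) f = f \<and> cCmp C f (cId C (cDom C f)) = f) \<and>
     (\<forall>f g h. f \<in> cArr C \<and> g \<in> cArr C \<and> h \<in> cArr C \<and> cCod C f = cDom C g \<and> cCod C g = cDom C h
            \<longrightarrow> cCmp C h (cCmp C g f) = cCmp C (cCmp C h g) f)"

definition iso_arr :: "('o, 'a, 'z) cat_scheme \<Rightarrow> 'a \<Rightarrow> bool" where
  "iso_arr C f \<longleftrightarrow> f \<in> cArr C \<and>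
     (\<exists>g\<in>hom C (cCod C f) (cDom C f).
        cCmp C g f = cId C (cDom C f) \<and> cCmp C f g = cId C (cCod C f))"

definition inv_arr :: "('o, 'a, 'z) cat_scheme \<Rightarrow> 'a \<Rightarrow> 'a" where
  "inv_arr C f = (THE g. g \<in> hom C (cCod C f) (cDom C f) \<and>
        cCmp C g f = cId C (cDom C f) \<and> cCmp C f g = cId C (cCod C f))"

definition is_pullback :: "('o, 'a, 'z) cat_scheme \<Rightarrow> 'a \<Rightarrow> 'a \<Rightarrow> 'a \<Rightarrow> 'a \<Rightarrow> bool" where
  "is_pullback C p1 p2 f g \<longleftrightarrow>
     p1 \<in> cArr C \<and> p2 \<in> cArr C \<and> f \<in> cArr C \<and> g \<in> cArr C \<and>
     cDom C p1 = cDom C p2 \<and> cDom C f = cCod C p1 \<and> cDom C g = cCod C p2 \<and>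
     cCod C f = cCod C g \<and> cCmp C f p1 = cCmp C g p2 \<and>
     (\<forall>q1 q2. q1 \<in> cArr C \<and> q2 \<in> cArr C \<and> cDom C q1 = cDom C q2 \<and>
              cCod C q1 = cCod C p1 \<and> cCod C q2 = cCod C p2 \<and> cCmp C f q1 = cCmp C g q2
        \<longrightarrow> (\<exists>!h. h \<in> hom C (cDom C q1) (cDom C p1) \<and> cCmp C p1 h = q1 \<and> cCmp C p2 h = q2))"

definition orth :: "('o, 'a, 'z) cat_scheme \<Rightarrow> 'a \<Rightarrow> 'a \<Rightarrow> bool" where
  "orth C e m \<longleftrightarrow> e \<in> cArr C \<and> m \<in> cArr C \<and>
     (\<forall>u v. u \<in> hom C (cDom C e) (cDom C m) \<and> v \<in> hom C (cCod C e) (cCod C m) \<and>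
            cCmp C m u = cCmp C v e
        \<longrightarrow> (\<exists>!w. w \<in> hom C (cCod C e) (cDom C m) \<and> cCmp C w e = u \<and> cCmp C m w = v))"

definition prefactorization_system :: "('o, 'a, 'z) cat_scheme \<Rightarrow> 'a set \<Rightarrow> 'a set \<Rightarrow> bool" where
  "prefactorization_system C E M \<longleftrightarrow>
     M = {m \<in> cArr C. \<forall>e\<in>E. orth C e m} \<and> E = {e \<in> cArr C. \<forall>m\<in>M. orth C e m}"

record ('o, 'a) smcat = "('o, 'a) cat" +
  tens  :: "'o \<Rightarrow> 'o \<Rightarrow> 'o"
  tensa :: "'a \<Rightarrow> 'a \<Rightarrow> 'a"
  unit  :: "'o"
  assoc :: "'o \<Rightarrow> 'o \<Rightarrow> 'o \<Rightarrow> 'a"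
  lunit :: "'o \<Rightarrow> 'a"
  runit :: "'o \<Rightarrow> 'a"
  symm  :: "'o \<Rightarrow> 'o \<Rightarrow> 'a"
  ihom  :: "'o \<Rightarrow> 'o \<Rightarrow> 'o"
  ev    :: "'o \<Rightarrow> 'o \<Rightarrow> 'a"

definition monoidal_category :: "('o, 'a) smcat \<Rightarrow> bool" where
  "monoidal_category V \<longleftrightarrow> category V \<and>
     unit V \<in> cObj V \<and>
     (\<forall>A\<in>cObj V. \<forall>B\<in>cObj V. tens V A B \<in> cObj V) \<and>
     \<comment> \<open>tensor is a bifunctor\<close>
     (\<forall>f\<in>cArr V. \<forall>g\<in>cArr V. tensa V f g \<in>
         hom V (tens V (cDom V f) (cDom V g)) (tens V (cCod V f) (cCod V g))) \<and>
     (\<forall>A\<in>cObj V. \<forall>B\<in>cObj V. tensa V (cId V A) (cId V B) = cId V (tens V A B)) \<and>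
     (\<forall>f g h k. f \<in> cArr V \<and> g \<in> cArr V \<and> h \<in> cArr V \<and> k \<in> cArr V \<and>
          cCod V f = cDom V g \<and> cCod V h = cDom V k \<longrightarrow>
          tensa V (cCmp V g f) (cCmp V k h) = cCmp V (tensa V g k) (tensa V f h)) \<and>
     \<comment> \<open>associator: natural isomorphism\<close>
     (\<forall>A\<in>cObj V. \<forall>B\<in>cObj V. \<forall>C\<in>cObj V.
         assoc V A B C \<in> hom V (tens V (tens V A B) C) (tens V A (tens V B C)) \<and>
         iso_arr V (assoc V A B C)) \<and>
     (\<forall>f\<in>cArr V. \<forall>g\<in>cArr V. \<forall>h\<in>cArr V.
         cCmp V (assoc V (cCod V f) (cCod V g) (cCod V h)) (tensa V (tensa V f g) h) =
         cCmp V (tensa V f (tensa V g h)) (assoc V (cDom V f) (cDom V g) (cDom V h))) \<and>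
     \<comment> \<open>unitors: natural isomorphisms\<close>
     (\<forall>A\<in>cObj V. lunit V A \<in> hom V (tens V (unit V) A) A \<and> iso_arr V (lunit V A)) \<and>
     (\<forall>A\<in>cObj V. runit V A \<in> hom V (tens V A (unit V)) A \<and> iso_arr V (runit V A)) \<and>
     (\<forall>f\<in>cArr V. cCmp V f (lunit V (cDom V f)) =
         cCmp V (lunit V (cCod V f)) (tensa V (cId V (unit V)) f)) \<and>
     (\<forall>f\<in>cArr V. cCmp V f (runit V (cDom V f)) =
         cCmp V (runit V (cCod V f)) (tensa V f (cId V (unit V)))) \<and>
     \<comment> \<open>pentagon\<close>
     (\<forall>A\<in>cObj V. \<forall>B\<in>cObj V. \<forall>C\<in>cObj V. \<forall>D\<in>cObj V.
         cCmp V (tensa V (cId V A) (assoc V B C D))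
           (cCmp V (assoc V A (tens V B C) D) (tensa V (assoc V A B C) (cId V D))) =
         cCmp V (assoc V A B (tens V C D)) (assoc V (tens V A B) C D)) \<and>
     \<comment> \<open>triangle\<close>
     (\<forall>A\<in>cObj V. \<forall>B\<in>cObj V.
         cCmp V (tensa V (cId V A) (lunit V B)) (assoc V A (unit V) B) =
         tensa V (runit V A) (cId V B)) \<and>
     \<comment> \<open>(redundant by Kelly's coherence lemma, included as in Mac Lane's original axioms)\<close>
     lunit V (unit V) = runit V (unit V)"

definition symmetric_monoidal_category :: "('o, 'a) smcat \<Rightarrow> bool" where
  "symmetric_monoidal_category V \<longleftrightarrow> monoidal_category V \<and>
     (\<forall>A\<in>cObj V. \<forall>B\<in>cObj V. symm V A B \<in> hom V (tens V A B) (tens V B A)) \<and>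
     (\<forall>f\<in>cArr V. \<forall>g\<in>cArr V.
         cCmp V (symm V (cCod V f) (cCod V g)) (tensa V f g) =
         cCmp V (tensa V g f) (symm V (cDom V f) (cDom V g))) \<and>
     (\<forall>A\<in>cObj V. \<forall>B\<in>cObj V. cCmp V (symm V B A) (symm V A B) = cId V (tens V A B)) \<and>
     \<comment> \<open>hexagon\<close>
     (\<forall>A\<in>cObj V. \<forall>B\<in>cObj V. \<forall>C\<in>cObj V.
         cCmp V (assoc V B C A) (cCmp V (symm V A (tens V B C)) (assoc V A B C)) =
         cCmp V (tensa V (cId V B) (symm V A C))
           (cCmp V (assoc V B A C) (tensa V (symm V A B) (cId V C))))"

text \<open>Closed: each functor (-) \<otimes> B has a right adjoint [B,-], given by internal homs
with evaluation maps having the universal property.\<close>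

definition closed_symmetric_monoidal_category :: "('o, 'a) smcat \<Rightarrow> bool" where
  "closed_symmetric_monoidal_category V \<longleftrightarrow> symmetric_monoidal_category V \<and>
     (\<forall>B\<in>cObj V. \<forall>C\<in>cObj V.
        ihom V B C \<in> cObj V \<and> ev V B C \<in> hom V (tens V (ihom V B C) B) C \<and>
        (\<forall>A\<in>cObj V. \<forall>f\<in>hom V (tens V A B) C.
            \<exists>!g. g \<in> hom V A (ihom V B C) \<and> cCmp V (ev V B C) (tensa V g (cId V B)) = f))"

text \<open>vComp A B C : B(B,C) \<otimes> B(A,B) \<rightarrow> B(A,C);  vId A : I \<rightarrow> B(A,A).\<close>

record ('b, 'o, 'a) vcat =
  vObj  :: "'b set"
  vHom  :: "'b \<Rightarrow> 'b \<Rightarrow> 'o"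
  vComp :: "'b \<Rightarrow> 'b \<Rightarrow> 'b \<Rightarrow> 'a"
  vId   :: "'b \<Rightarrow> 'a"

definition enriched_category :: "('o, 'a) smcat \<Rightarrow> ('b, 'o, 'a) vcat \<Rightarrow> bool" where
  "enriched_category V \<B> \<longleftrightarrow>
     (\<forall>A\<in>vObj \<B>. \<forall>B\<in>vObj \<B>. vHom \<B> A B \<in> cObj V) \<and>
     (\<forall>A\<in>vObj \<B>. \<forall>B\<in>vObj \<B>. \<forall>C\<in>vObj \<B>.
        vComp \<B> A B C \<in> hom V (tens V (vHom \<B> B C) (vHom \<B> A B)) (vHom \<B> A C)) \<and>
     (\<forall>A\<in>vObj \<B>. vId \<B> A \<in> hom V (unit V) (vHom \<B> A A)) \<and>
     (\<forall>A\<in>vObj \<B>. \<forall>B\<in>vObj \<B>. \<forall>C\<in>vObj \<B>. \<forall>D\<in>vObj \<B>.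
        cCmp V (vComp \<B> A C D)
          (cCmp V (tensa V (cId V (vHom \<B> C D)) (vComp \<B> A B C))
             (assoc V (vHom \<B> C D) (vHom \<B> B C) (vHom \<B> A B))) =
        cCmp V (vComp \<B> A B D) (tensa V (vComp \<B> B C D) (cId V (vHom \<B> A B)))) \<and>
     (\<forall>A\<in>vObj \<B>. \<forall>B\<in>vObj \<B>.
        cCmp V (vComp \<B> A B B) (tensa V (vId \<B> B) (cId V (vHom \<B> A B))) = lunit V (vHom \<B> A B)) \<and>
     (\<forall>A\<in>vObj \<B>. \<forall>B\<in>vObj \<B>.
        cCmp V (vComp \<B> A A B) (tensa V (cId V (vHom \<B> A B)) (vId \<B> A)) = runit V (vHom \<B> A B))"

text \<open>The underlying ordinary category B_0: an arrow A \<rightarrow> B is a triple (A, B, f) with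
f : I \<rightarrow> \<B>(A,B) in V; composition g . f = M \<circ> (g \<otimes> f) \<circ> inverse of the left unitor at I.\<close>

definition underlying :: "('o, 'a) smcat \<Rightarrow> ('b, 'o, 'a) vcat \<Rightarrow> ('b, 'b \<times> 'b \<times> 'a) cat" where
  "underlying V \<B> =
    \<lparr> cObj = vObj \<B>,
      cArr = {(A, B, f). A \<in> vObj \<B> \<and> B \<in> vObj \<B> \<and> f \<in> hom V (unit V) (vHom \<B> A B)},
      cDom = (\<lambda>(A, B, f). A),
      cCod = (\<lambda>(A, B, f). B),
      cCmp = (\<lambda>(B', C, g) (A, B, f).
                (A, C, cCmp V (vComp \<B> A B C)
                         (cCmp V (tensa V g f) (inv_arr V (lunit V (unit V)))))),
      cId = (\<lambda>A. (A, A, vId \<B> A)) \<rparr>"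

text \<open>\<B>(A,m) : \<B>(A,B1) \<rightarrow> \<B>(A,B2) for m : B1 \<rightarrow> B2, and \<B>(e,B) : \<B>(A2,B) \<rightarrow> \<B>(A1,B)
for e : A1 \<rightarrow> A2.\<close>

definition homL :: "('o, 'a) smcat \<Rightarrow> ('b, 'o, 'a) vcat \<Rightarrow> 'b \<Rightarrow> 'b \<times> 'b \<times> 'a \<Rightarrow> 'a" where
  "homL V \<B> A m = (case m of (B1, B2, m') \<Rightarrow>
      cCmp V (vComp \<B> A B1 B2)
        (cCmp V (tensa V m' (cId V (vHom \<B> A B1))) (inv_arr V (lunit V (vHom \<B> A B1)))))"

definition homR :: "('o, 'a) smcat \<Rightarrow> ('b, 'o, 'a) vcat \<Rightarrow> 'b \<times> 'b \<times> 'a \<Rightarrow> 'b \<Rightarrow> 'a" where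
  "homR V \<B> e B = (case e of (A1, A2, e') \<Rightarrow>
      cCmp V (vComp \<B> A1 A2 B)
        (cCmp V (tensa V (cId V (vHom \<B> A2 B)) e') (inv_arr V (runit V (vHom \<B> A2 B)))))"

text \<open>V-orthogonality: the square with sides \<B>(A2,m), \<B>(A1,m), \<B>(e,B1), \<B>(e,B2) is a
pullback in V.\<close>

definition vorth :: "('o, 'a) smcat \<Rightarrow> ('b, 'o, 'a) vcat \<Rightarrow> 'b \<times> 'b \<times> 'a \<Rightarrow> 'b \<times> 'b \<times> 'a \<Rightarrow> bool" where
  "vorth V \<B> e m \<longleftrightarrow> e \<in> cArr (underlying V \<B>) \<and> m \<in> cArr (underlying V \<B>) \<and>
     (case e of (A1, A2, _) \<Rightarrow> case m of (B1, B2, _) \<Rightarrow>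
        is_pullback V (homL V \<B> A2 m) (homR V \<B> e B1) (homR V \<B> e B2) (homL V \<B> A1 m))"

definition vprefactorization_system ::
  "('o, 'a) smcat \<Rightarrow> ('b, 'o, 'a) vcat \<Rightarrow> ('b \<times> 'b \<times> 'a) set \<Rightarrow> ('b \<times> 'b \<times> 'a) set \<Rightarrow> bool" where
  "vprefactorization_system V \<B> E M \<longleftrightarrow>
     M = {m \<in> cArr (underlying V \<B>). \<forall>e\<in>E. vorth V \<B> e m} \<and>
     E = {e \<in> cArr (underlying V \<B>). \<forall>m\<in>M. vorth V \<B> e m}"

end

theory Submission
  imports Defs
begin
lemma cat_parts:
  assumes "category C"
  shows "\<And>f. f\<in>cArr C \<Longrightarrow> cDom C f \<in> cObj C \<and> cCod C f \<in> cObj C"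
    "\<And>A. A\<in>cObj C \<Longrightarrow> cId C A \<in> hom C A A"
    "\<And>f g. f \<in> cArr C \<Longrightarrow> g \<in> cArr C \<Longrightarrow> cCod C f = cDom C g
            \<Longrightarrow> cCmp C g f \<in> hom C (cDom C f) (cCod C g)"
    "\<And>f. f\<in>cArr C \<Longrightarrow> cCmp C (cId C (cCod C f)) f = f \<and> cCmp C f (cId C (cDom C f)) = f"
    "\<And>f g h. f \<in> cArr C \<Longrightarrow> g \<in> cArr C \<Longrightarrow> h \<in> cArr C \<Longrightarrow> cCod C f = cDom C g \<Longrightarrow> cCod C g = cDom C h
            \<Longrightarrow> cCmp C h (cCmp C g f) = cCmp C (cCmp C h g) f"
  using assms unfolding category_def by blast+

lemma cat_comp_hom:
  assumes "category C" "f \<in> hom C X Y" "g \<in> hom C Y Z"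
  shows "cCmp C g f \<in> hom C X Z"
  using cat_parts(3)[OF assms(1)] assms(2,3) unfolding hom_def by force

lemma cat_assoc:
  assumes "category C" "f \<in> hom C X Y" "g \<in> hom C Y Z" "h \<in> hom C Z W"
  shows "cCmp C h (cCmp C g f) = cCmp C (cCmp C h g) f"
  using cat_parts(5)[OF assms(1)] assms(2-4) unfolding hom_def by force

lemma cat_idl:
  assumes "category C" "f \<in> hom C X Y"
  shows "cCmp C (cId C Y) f = f"
  using cat_parts(4)[OF assms(1)] assms(2) unfolding hom_def by force

lemma cat_idr:
  assumes "category C" "f \<in> hom C X Y"
  shows "cCmp C f (cId C X) = f"
  using cat_parts(4)[OF assms(1)] assms(2) unfolding hom_def by force

lemma cat_id_hom:
  assumes "category C" "X \<in> cObj C"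
  shows "cId C X \<in> hom C X X"
  using cat_parts(2)[OF assms] .

lemma hom_obj:
  assumes "category C" "f \<in> hom C X Y"
  shows "X \<in> cObj C" "Y \<in> cObj C"
  using cat_parts(1)[OF assms(1)] assms(2) unfolding hom_def by force+

lemma inv_arr_props:
  assumes C: "category C" and i: "iso_arr C f" and fh: "f \<in> hom C X Y"
  shows "inv_arr C f \<in> hom C Y X \<and> cCmp C (inv_arr C f) f = cId C X \<and> cCmp C f (inv_arr C f) = cId C Y"
proof -
  have dc: "cDom C f = X" "cCod C f = Y" using fh unfolding hom_def by auto
  obtain g where g: "g \<in> hom C Y X" "cCmp C g f = cId C X" "cCmp C f g = cId C Y"
    using i dc unfolding iso_arr_def by auto
  have uniq: "g' = g" if g': "g' \<in> hom C Y X" "cCmp C g' f = cId C X" "cCmp C f g' = cId C Y" for g'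
  proof -
    have "g' = cCmp C g' (cId C Y)" using cat_idr[OF C g'(1)] by simp
    also have "\<dots> = cCmp C g' (cCmp C f g)" using g by simp
    also have "\<dots> = cCmp C (cCmp C g' f) g" using cat_assoc[OF C g(1) fh g'(1)] .
    also have "\<dots> = g" using g'(2) cat_idl[OF C g(1)] by simp
    finally show ?thesis .
  qed
  have "inv_arr C f = g" unfolding inv_arr_def dc
    apply (rule the_equality) using g apply blast using uniq by blast
  thus ?thesis using g by simp
qed

lemma iso_square:
  assumes C: "category C" and ia: "iso_arr C a" and ib: "iso_arr C b"
    and a: "a \<in> hom C P X" and b: "b \<in> hom C Q Y" and f: "f \<in> hom C X Y" and g: "g \<in> hom C P Q"
    and sq: "cCmp C f a = cCmp C b g"
  shows "cCmp C (inv_arr C b) f = cCmp C g (inv_arr C a)"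
proof -
  note A = inv_arr_props[OF C ia a] and B = inv_arr_props[OF C ib b]
  have "cCmp C (inv_arr C b) f = cCmp C (inv_arr C b) (cCmp C f (cId C X))"
    using cat_idr[OF C f] by simp
  also have "\<dots> = cCmp C (inv_arr C b) (cCmp C f (cCmp C a (inv_arr C a)))" using A by simp
  also have "\<dots> = cCmp C (inv_arr C b) (cCmp C (cCmp C f a) (inv_arr C a))"
    using cat_assoc[OF C conjunct1[OF A] a f] by simp
  also have "\<dots> = cCmp C (inv_arr C b) (cCmp C (cCmp C b g) (inv_arr C a))" using sq by simp
  also have "\<dots> = cCmp C (inv_arr C b) (cCmp C b (cCmp C g (inv_arr C a)))"
    using cat_assoc[OF C conjunct1[OF A] g b] by simp
  also have "\<dots> = cCmp C (cCmp C (inv_arr C b) b) (cCmp C g (inv_arr C a))"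
    using cat_assoc[OF C cat_comp_hom[OF C conjunct1[OF A] g] b conjunct1[OF B]] .
  also have "\<dots> = cCmp C g (inv_arr C a)"
    using B cat_idl[OF C cat_comp_hom[OF C conjunct1[OF A] g]] by simp
  finally show ?thesis .
qed

locale vctx =
  fixes V :: "('o,'a) smcat" and B :: "('b,'o,'a) vcat"
  assumes mon: "monoidal_category V" and enr: "enriched_category V B"
begin

lemma C: "category V" using mon unfolding monoidal_category_def by (elim conjE) assumption
lemma I: "unit V \<in> cObj V" using mon unfolding monoidal_category_def by (elim conjE) assumption

lemma tensa_hom:
  assumes "f \<in> hom V X Y" "g \<in> hom V Z W"
  shows "tensa V f g \<in> hom V (tens V X Z) (tens V Y W)"
proof -
  have "\<forall>f\<in>cArr V. \<forall>g\<in>cArr V. tensa V f g \<in>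
         hom V (tens V (cDom V f) (cDom V g)) (tens V (cCod V f) (cCod V g))"
    using mon unfolding monoidal_category_def by (elim conjE) assumption
  note A = this
  have f: "f \<in> cArr V" "g \<in> cArr V" "cDom V f = X" "cCod V f = Y" "cDom V g = Z" "cCod V g = W"
    using assms by (auto simp: hom_def)
  show ?thesis using bspec[OF bspec[OF A f(1)] f(2)] unfolding f(3-6) .
qed

lemma tensa_comp:
  assumes "f \<in> hom V X Y" "g \<in> hom V Y Z" "h \<in> hom V P Q" "k \<in> hom V Q R"
  shows "tensa V (cCmp V g f) (cCmp V k h) = cCmp V (tensa V g k) (tensa V f h)"
proof -
  have "\<forall>f g h k. f \<in> cArr V \<and> g \<in> cArr V \<and> h \<in> cArr V \<and> k \<in> cArr V \<and>
          cCod V f = cDom V g \<and> cCod V h = cDom V k \<longrightarrow>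
          tensa V (cCmp V g f) (cCmp V k h) = cCmp V (tensa V g k) (tensa V f h)"
    using mon unfolding monoidal_category_def by (elim conjE) assumption
  moreover have "f \<in> cArr V" "g \<in> cArr V" "h \<in> cArr V" "k \<in> cArr V" "cCod V f = cDom V g" "cCod V h = cDom V k"
    using assms by (auto simp: hom_def)
  ultimately show ?thesis by (elim allE impE) (auto simp only: conj_absorb)
qed

lemma lunit0: "\<forall>A\<in>cObj V. lunit V A \<in> hom V (tens V (unit V) A) A \<and> iso_arr V (lunit V A)"
  using mon unfolding monoidal_category_def by (elim conjE) assumption
lemma lunit: "A \<in> cObj V \<Longrightarrow> lunit V A \<in> hom V (tens V (unit V) A) A \<and> iso_arr V (lunit V A)"
  using lunit0 by blast
lemma runit0: "\<forall>A\<in>cObj V. runit V A \<in> hom V (tens V A (unit V)) A \<and> iso_arr V (runit V A)"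
  using mon unfolding monoidal_category_def by (elim conjE) assumption
lemma runit: "A \<in> cObj V \<Longrightarrow> runit V A \<in> hom V (tens V A (unit V)) A \<and> iso_arr V (runit V A)"
  using runit0 by blast
lemma lr: "lunit V (unit V) = runit V (unit V)"
  using mon unfolding monoidal_category_def by (elim conjE) assumption

lemma lnat:
  assumes "f \<in> hom V X Y"
  shows "cCmp V f (lunit V X) = cCmp V (lunit V Y) (tensa V (cId V (unit V)) f)"
proof -
  have A: "\<forall>f\<in>cArr V. cCmp V f (lunit V (cDom V f)) =
         cCmp V (lunit V (cCod V f)) (tensa V (cId V (unit V)) f)"
    using mon unfolding monoidal_category_def by (elim conjE) assumption
  have f: "f \<in> cArr V" "cDom V f = X" "cCod V f = Y"
    using assms by (auto simp: hom_def)
  show ?thesis using bspec[OF A f(1)] unfolding f(2,3) .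
qed

lemma rnat:
  assumes "f \<in> hom V X Y"
  shows "cCmp V f (runit V X) = cCmp V (runit V Y) (tensa V f (cId V (unit V)))"
proof -
  have A: "\<forall>f\<in>cArr V. cCmp V f (runit V (cDom V f)) =
         cCmp V (runit V (cCod V f)) (tensa V f (cId V (unit V)))"
    using mon unfolding monoidal_category_def by (elim conjE) assumption
  have f: "f \<in> cArr V" "cDom V f = X" "cCod V f = Y"
    using assms by (auto simp: hom_def)
  show ?thesis using bspec[OF A f(1)] unfolding f(2,3) .
qed

lemma vHom0: "\<forall>A\<in>vObj B. \<forall>C\<in>vObj B. vHom B A C \<in> cObj V"
  using enr unfolding enriched_category_def by (elim conjE) assumption
lemma vHom: "A \<in> vObj B \<Longrightarrow> C \<in> vObj B \<Longrightarrow> vHom B A C \<in> cObj V"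
  using vHom0 by blast
lemma vComp0: "\<forall>A\<in>vObj B. \<forall>B'\<in>vObj B. \<forall>C\<in>vObj B.
        vComp B A B' C \<in> hom V (tens V (vHom B B' C) (vHom B A B')) (vHom B A C)"
  using enr unfolding enriched_category_def by (elim conjE) assumption
lemma vComp: "A \<in> vObj B \<Longrightarrow> B' \<in> vObj B \<Longrightarrow> C \<in> vObj B \<Longrightarrow>
   vComp B A B' C \<in> hom V (tens V (vHom B B' C) (vHom B A B')) (vHom B A C)"
  using vComp0 by blast

abbreviation "II \<equiv> unit V"
abbreviation "iI \<equiv> inv_arr V (lunit V (unit V))"

lemma iI: "iI \<in> hom V II (tens V II II)"
  using inv_arr_props[OF C conjunct2[OF lunit[OF I]] conjunct1[OF lunit[OF I]]] by blast

lemma homL_hom: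
  assumes "A \<in> vObj B" "B1 \<in> vObj B" "B2 \<in> vObj B" "m' \<in> hom V II (vHom B B1 B2)"
  shows "homL V B A (B1,B2,m') \<in> hom V (vHom B A B1) (vHom B A B2)"
proof -
  let ?X = "vHom B A B1"
  have X: "?X \<in> cObj V" using vHom assms by blast
  have i: "inv_arr V (lunit V ?X) \<in> hom V ?X (tens V II ?X)"
    using inv_arr_props[OF C conjunct2[OF lunit[OF X]] conjunct1[OF lunit[OF X]]] by blast
  have t: "tensa V m' (cId V ?X) \<in> hom V (tens V II ?X) (tens V (vHom B B1 B2) ?X)"
    using tensa_hom[OF assms(4) cat_id_hom[OF C X]] .
  show ?thesis unfolding homL_def
    using cat_comp_hom[OF C cat_comp_hom[OF C i t] vComp[OF assms(1-3)]] by simp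
qed

lemma homR_hom:
  assumes "A1 \<in> vObj B" "A2 \<in> vObj B" "B1 \<in> vObj B" "e' \<in> hom V II (vHom B A1 A2)"
  shows "homR V B (A1,A2,e') B1 \<in> hom V (vHom B A2 B1) (vHom B A1 B1)"
proof -
  let ?Y = "vHom B A2 B1"
  have Y: "?Y \<in> cObj V" using vHom assms by blast
  have i: "inv_arr V (runit V ?Y) \<in> hom V ?Y (tens V ?Y II)"
    using inv_arr_props[OF C conjunct2[OF runit[OF Y]] conjunct1[OF runit[OF Y]]] by blast
  have t: "tensa V (cId V ?Y) e' \<in> hom V (tens V ?Y II) (tens V ?Y (vHom B A1 A2))"
    using tensa_hom[OF cat_id_hom[OF C Y] assms(4)] .
  show ?thesis unfolding homR_def
    using cat_comp_hom[OF C cat_comp_hom[OF C i t] vComp[OF assms(1-3)]] by simp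
qed

lemma homL_comp:
  assumes "A \<in> vObj B" "B1 \<in> vObj B" "B2 \<in> vObj B" "m' \<in> hom V II (vHom B B1 B2)"
    and f': "f' \<in> hom V II (vHom B A B1)"
  shows "cCmp V (homL V B A (B1,B2,m')) f' = cCmp V (vComp B A B1 B2) (cCmp V (tensa V m' f') iI)"
proof -
  let ?X = "vHom B A B1"
  have X: "?X \<in> cObj V" using vHom assms by blast
  have i: "inv_arr V (lunit V ?X) \<in> hom V ?X (tens V II ?X)"
    using inv_arr_props[OF C conjunct2[OF lunit[OF X]] conjunct1[OF lunit[OF X]]] by blast
  have idX: "cId V ?X \<in> hom V ?X ?X" using cat_id_hom[OF C X] .
  have idI: "cId V II \<in> hom V II II" using cat_id_hom[OF C I] .
  have t: "tensa V m' (cId V ?X) \<in> hom V (tens V II ?X) (tens V (vHom B B1 B2) ?X)"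
    using tensa_hom[OF assms(4) idX] .
  have t2: "tensa V (cId V II) f' \<in> hom V (tens V II II) (tens V II ?X)"
    using tensa_hom[OF idI f'] .
  have sq: "cCmp V (inv_arr V (lunit V ?X)) f' = cCmp V (tensa V (cId V II) f') iI"
    apply (rule iso_square[OF C conjunct2[OF lunit[OF I]] conjunct2[OF lunit[OF X]]
           conjunct1[OF lunit[OF I]] conjunct1[OF lunit[OF X]] f' t2])
    using lnat[OF f'] .
  have "cCmp V (homL V B A (B1,B2,m')) f'
     = cCmp V (cCmp V (vComp B A B1 B2) (cCmp V (tensa V m' (cId V ?X)) (inv_arr V (lunit V ?X)))) f'"
    unfolding homL_def by simp
  also have "\<dots> = cCmp V (vComp B A B1 B2) (cCmp V (cCmp V (tensa V m' (cId V ?X)) (inv_arr V (lunit V ?X))) f')"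
    using cat_assoc[OF C f' cat_comp_hom[OF C i t] vComp[OF assms(1-3)]] by simp
  also have "cCmp V (cCmp V (tensa V m' (cId V ?X)) (inv_arr V (lunit V ?X))) f'
     = cCmp V (tensa V m' (cId V ?X)) (cCmp V (inv_arr V (lunit V ?X)) f')"
    using cat_assoc[OF C f' i t] by simp
  also have "\<dots> = cCmp V (tensa V m' (cId V ?X)) (cCmp V (tensa V (cId V II) f') iI)"
    using sq by simp
  also have "\<dots> = cCmp V (cCmp V (tensa V m' (cId V ?X)) (tensa V (cId V II) f')) iI"
    using cat_assoc[OF C iI t2 t] .
  also have "cCmp V (tensa V m' (cId V ?X)) (tensa V (cId V II) f') = tensa V (cCmp V m' (cId V II)) (cCmp V (cId V ?X) f')"
    using tensa_comp[OF idI assms(4) f' idX] by simp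
  also have "\<dots> = tensa V m' f'" using cat_idr[OF C assms(4)] cat_idl[OF C f'] by simp
  finally show ?thesis .
qed

lemma homR_comp:
  assumes "A1 \<in> vObj B" "A2 \<in> vObj B" "B1 \<in> vObj B" "e' \<in> hom V II (vHom B A1 A2)"
    and g': "g' \<in> hom V II (vHom B A2 B1)"
  shows "cCmp V (homR V B (A1,A2,e') B1) g' = cCmp V (vComp B A1 A2 B1) (cCmp V (tensa V g' e') iI)"
proof -
  let ?Y = "vHom B A2 B1"
  have Y: "?Y \<in> cObj V" using vHom assms by blast
  have i: "inv_arr V (runit V ?Y) \<in> hom V ?Y (tens V ?Y II)"
    using inv_arr_props[OF C conjunct2[OF runit[OF Y]] conjunct1[OF runit[OF Y]]] by blast
  have idY: "cId V ?Y \<in> hom V ?Y ?Y" using cat_id_hom[OF C Y] .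
  have idI: "cId V II \<in> hom V II II" using cat_id_hom[OF C I] .
  have t: "tensa V (cId V ?Y) e' \<in> hom V (tens V ?Y II) (tens V ?Y (vHom B A1 A2))"
    using tensa_hom[OF idY assms(4)] .
  have t2: "tensa V g' (cId V II) \<in> hom V (tens V II II) (tens V ?Y II)"
    using tensa_hom[OF g' idI] .
  have sq: "cCmp V (inv_arr V (runit V ?Y)) g' = cCmp V (tensa V g' (cId V II)) (inv_arr V (runit V II))"
    apply (rule iso_square[OF C conjunct2[OF runit[OF I]] conjunct2[OF runit[OF Y]]
           conjunct1[OF runit[OF I]] conjunct1[OF runit[OF Y]] g' t2])
    using rnat[OF g'] .
  have "cCmp V (homR V B (A1,A2,e') B1) g'
     = cCmp V (cCmp V (vComp B A1 A2 B1) (cCmp V (tensa V (cId V ?Y) e') (inv_arr V (runit V ?Y)))) g'"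
    unfolding homR_def by simp
  also have "\<dots> = cCmp V (vComp B A1 A2 B1) (cCmp V (cCmp V (tensa V (cId V ?Y) e') (inv_arr V (runit V ?Y))) g')"
    using cat_assoc[OF C g' cat_comp_hom[OF C i t] vComp[OF assms(1-3)]] by simp
  also have "cCmp V (cCmp V (tensa V (cId V ?Y) e') (inv_arr V (runit V ?Y))) g'
     = cCmp V (tensa V (cId V ?Y) e') (cCmp V (inv_arr V (runit V ?Y)) g')"
    using cat_assoc[OF C g' i t] by simp
  also have "\<dots> = cCmp V (tensa V (cId V ?Y) e') (cCmp V (tensa V g' (cId V II)) iI)"
    using sq lr by simp
  also have "\<dots> = cCmp V (cCmp V (tensa V (cId V ?Y) e') (tensa V g' (cId V II))) iI"
    using cat_assoc[OF C iI t2 t] .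
  also have "cCmp V (tensa V (cId V ?Y) e') (tensa V g' (cId V II)) = tensa V (cCmp V (cId V ?Y) g') (cCmp V e' (cId V II))"
    using tensa_comp[OF g' idY idI assms(4)] by simp
  also have "\<dots> = tensa V g' e'" using cat_idr[OF C assms(4)] cat_idl[OF C g'] by simp
  finally show ?thesis .
qed


abbreviation "UU \<equiv> underlying V B"

lemma U_arr: "cArr UU = {(A, C, f). A \<in> vObj B \<and> C \<in> vObj B \<and> f \<in> hom V II (vHom B A C)}"
  by (simp add: underlying_def)
lemma U_dom: "cDom UU (A,C,f) = A" by (simp add: underlying_def)
lemma U_cod: "cCod UU (A,C,f) = C" by (simp add: underlying_def)
lemma U_cmp: "cCmp UU (B',C,g) (A,B1,f) = (A, C, cCmp V (vComp B A B1 C) (cCmp V (tensa V g f) iI))"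
  by (simp add: underlying_def)

lemma U_hom: "x \<in> hom UU A C \<longleftrightarrow> (\<exists>f. x = (A,C,f) \<and> A \<in> vObj B \<and> C \<in> vObj B \<and> f \<in> hom V II (vHom B A C))"
  unfolding hom_def U_arr by (auto simp: U_dom U_cod)

lemma hom_cod: "f \<in> hom V X Y \<Longrightarrow> cCod V f = Y" by (simp add: hom_def)
lemma hom_dom: "f \<in> hom V X Y \<Longrightarrow> cDom V f = X" by (simp add: hom_def)
lemma hom_arr: "f \<in> hom V X Y \<Longrightarrow> f \<in> cArr V" by (simp add: hom_def)

lemma vorth_orth:
  assumes vo: "vorth V B e m"
  shows "orth UU e m"
proof -
  obtain A1 A2 e' where e: "e = (A1,A2,e')" by (cases e) auto
  obtain B1 B2 m' where m: "m = (B1,B2,m')" by (cases m) auto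
  have eA: "e \<in> cArr UU" and mA: "m \<in> cArr UU" using vo unfolding vorth_def by auto
  have o: "A1 \<in> vObj B" "A2 \<in> vObj B" "e' \<in> hom V II (vHom B A1 A2)"
    using eA unfolding e U_arr by auto
  have o2: "B1 \<in> vObj B" "B2 \<in> vObj B" "m' \<in> hom V II (vHom B B1 B2)"
    using mA unfolding m U_arr by auto
  have pb: "is_pullback V (homL V B A2 m) (homR V B e B1) (homR V B e B2) (homL V B A1 m)"
    using vo unfolding vorth_def e m by simp
  have p1: "homL V B A2 m \<in> hom V (vHom B A2 B1) (vHom B A2 B2)"
    unfolding m using homL_hom[OF o(2) o2] .
  have p2: "homR V B e B1 \<in> hom V (vHom B A2 B1) (vHom B A1 B1)"
    unfolding e using homR_hom[OF o(1) o(2) o2(1) o(3)] by simp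
  have PB: "\<forall>q1 q2. q1 \<in> cArr V \<and> q2 \<in> cArr V \<and> cDom V q1 = cDom V q2 \<and>
              cCod V q1 = cCod V (homL V B A2 m) \<and> cCod V q2 = cCod V (homR V B e B1) \<and>
              cCmp V (homR V B e B2) q1 = cCmp V (homL V B A1 m) q2
        \<longrightarrow> (\<exists>!h. h \<in> hom V (cDom V q1) (cDom V (homL V B A2 m)) \<and>
                 cCmp V (homL V B A2 m) h = q1 \<and> cCmp V (homR V B e B1) h = q2)"
    using pb unfolding is_pullback_def by blast
  show ?thesis unfolding orth_def
  proof (intro conjI eA mA allI impI)
    fix u v
    assume H: "u \<in> hom UU (cDom UU e) (cDom UU m) \<and> v \<in> hom UU (cCod UU e) (cCod UU m) \<and>
            cCmp UU m u = cCmp UU v e"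
    obtain u' where u: "u = (A1,B1,u')" "u' \<in> hom V II (vHom B A1 B1)"
      using H unfolding e m U_dom U_cod U_hom by auto
    obtain v' where v: "v = (A2,B2,v')" "v' \<in> hom V II (vHom B A2 B2)"
      using H unfolding e m U_dom U_cod U_hom by auto
    have eq: "cCmp V (homR V B e B2) v' = cCmp V (homL V B A1 m) u'"
    proof -
      have "cCmp UU m u = cCmp UU v e" using H by blast
      hence "cCmp V (vComp B A1 B1 B2) (cCmp V (tensa V m' u') iI) =
             cCmp V (vComp B A1 A2 B2) (cCmp V (tensa V v' e') iI)"
        unfolding u(1) v(1) e m U_cmp by simp
      thus ?thesis unfolding e m
        using homL_comp[OF o(1) o2 u(2)] homR_comp[OF o(1) o(2) o2(2) o(3) v(2)] by simp
    qed
    have "\<exists>!h. h \<in> hom V (cDom V v') (cDom V (homL V B A2 m)) \<and>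
                 cCmp V (homL V B A2 m) h = v' \<and> cCmp V (homR V B e B1) h = u'"
      apply (rule PB[rule_format])
      using u(2) v(2) eq p1 p2 by (auto simp: hom_def)
    hence EX: "\<exists>!h. h \<in> hom V II (vHom B A2 B1) \<and>
                 cCmp V (homL V B A2 m) h = v' \<and> cCmp V (homR V B e B1) h = u'"
      using hom_dom[OF v(2)] hom_dom[OF p1] by simp
    have cw1: "cCmp UU w e = (A1, B1, cCmp V (homR V B e B1) h)"
      if "w = (A2,B1,h)" "h \<in> hom V II (vHom B A2 B1)" for w h
      using that homR_comp[OF o(1) o(2) o2(1) o(3) that(2)] unfolding e by (simp add: U_cmp)
    have cw2: "cCmp UU m w = (A2, B2, cCmp V (homL V B A2 m) h)"
      if "w = (A2,B1,h)" "h \<in> hom V II (vHom B A2 B1)" for w h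
      using that homL_comp[OF o(2) o2 that(2)] unfolding m by (simp add: U_cmp)
    from EX obtain h where h: "h \<in> hom V II (vHom B A2 B1)"
        "cCmp V (homL V B A2 m) h = v'" "cCmp V (homR V B e B1) h = u'"
      and hu: "\<And>h'. h' \<in> hom V II (vHom B A2 B1) \<and>
                 cCmp V (homL V B A2 m) h' = v' \<and> cCmp V (homR V B e B1) h' = u' \<Longrightarrow> h' = h"
      by blast
    show "\<exists>!w. w \<in> hom UU (cCod UU e) (cDom UU m) \<and> cCmp UU w e = u \<and> cCmp UU m w = v"
    proof (rule ex1I[where a="(A2,B1,h)"])
      show "(A2,B1,h) \<in> hom UU (cCod UU e) (cDom UU m) \<and> cCmp UU (A2,B1,h) e = u \<and> cCmp UU m (A2,B1,h) = v"
        using cw1[OF refl h(1)] cw2[OF refl h(1)] h o o2 unfolding e m u(1) v(1)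
        by (auto simp: U_hom U_dom U_cod)
    next
      fix w assume w: "w \<in> hom UU (cCod UU e) (cDom UU m) \<and> cCmp UU w e = u \<and> cCmp UU m w = v"
      then obtain w' where w': "w = (A2,B1,w')" "w' \<in> hom V II (vHom B A2 B1)"
        unfolding e m U_dom U_cod U_hom by auto
      have "w' = h"
        apply (rule hu)
        using w cw1[OF w'] cw2[OF w'] w'(2) unfolding u(1) v(1) by auto
      thus "w = (A2,B1,h)" using w' by simp
    qed
  qed
qed

end

theorem proposition5p1:
  fixes V :: "('o, 'a) smcat" and \<B> :: "('b, 'o, 'a) vcat"
    and E M :: "('b \<times> 'b \<times> 'a) set"
  assumes "closed_symmetric_monoidal_category V"
    and "enriched_category V \<B>"
    and "prefactorization_system (underlying V \<B>) E M"
    and "\<forall>e\<in>E. \<forall>m\<in>M. vorth V \<B> e m"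
  shows "vprefactorization_system V \<B> E M"
proof -
  have mon: "monoidal_category V" using assms(1)
    unfolding closed_symmetric_monoidal_category_def symmetric_monoidal_category_def by blast
  interpret vctx V \<B> using mon assms(2) by unfold_locales
  have M: "M = {m \<in> cArr (underlying V \<B>). \<forall>e\<in>E. orth (underlying V \<B>) e m}"
   and E: "E = {e \<in> cArr (underlying V \<B>). \<forall>m\<in>M. orth (underlying V \<B>) e m}"
    using assms(3) unfolding prefactorization_system_def by blast+
  show ?thesis unfolding vprefactorization_system_def
  proof
    show "M = {m \<in> cArr (underlying V \<B>). \<forall>e\<in>E. vorth V \<B> e m}"
    proof
      show "M \<subseteq> {m \<in> cArr (underlying V \<B>). \<forall>e\<in>E. vorth V \<B> e m}"
        using assms(4) M by blast
      show "{m \<in> cArr (underlying V \<B>). \<forall>e\<in>E. vorth V \<B> e m} \<subseteq> M"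
        by (subst M) (auto intro: vorth_orth)
    qed
    show "E = {e \<in> cArr (underlying V \<B>). \<forall>m\<in>M. vorth V \<B> e m}"
    proof
      show "E \<subseteq> {e \<in> cArr (underlying V \<B>). \<forall>m\<in>M. vorth V \<B> e m}"
        using assms(4) E by blast
      show "{e \<in> cArr (underlying V \<B>). \<forall>m\<in>M. vorth V \<B> e m} \<subseteq> E"
        by (subst E) (auto intro: vorth_orth)
    qed
  qed
qed

end
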